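(* Let $a\in\mathbb{R}$, $w\in\mathbb{C}\setminus\mathbb{R}$ with $\varphi := |\operatorname{Arg}(w)|\in(\pi/2,\pi)$, and $\tau>0$. Then all roots of $z + a - we^{-\tau z} = 0$ have negative real parts if and only if one of the following holds: (i) $a \ge 0$ and $|w| < \frac{1}{\tau}R_2(-\tau a;\varphi)$; (ii) $-\frac{1}{\tau}M(\varphi) < a < 0$ and $\frac{1}{\tau}R_1(-\tau a;\varphi) < |w| < \frac{1}{\tau}R_2(-\tau a;\varphi)$.
   Context: $\operatorname{Arg}(w)\in(-\pi,\pi]$ is the principal argument. For $\varphi\in(\pi/2,\pi)$: $C(\theta;\varphi) := \theta\cot(\theta-\varphi)$ on $[0,\varphi)$; $S(\varphi)\in(0,\varphi)$ is the unique solution of $\sin(2\theta-2\varphi)=2\theta$; $C(\cdot;\varphi)$ is strictly increasing on $[0,S(\varphi)]$ and strictly decreasing on $[S(\varphi),\varphi)$ with maximum $M(\varphi) := \cos^2(S(\varphi)-\varphi)$, $C(0;\varphi)=0$, and $C(\theta;\varphi)\to-\infty$ as $\theta\uparrow\varphi$. $C_1^{-1}(\cdot;\varphi):[0,M(\varphi)]\to[0,S(\varphi)]$ and $C_2^{-1}(\cdot;\varphi):(-\infty,M(\varphi)]\to[S(\varphi),\varphi)$ are the inverses of the restrictions of $C(\cdot;\varphi)$ to $[0,S(\varphi)]$ and $[S(\varphi),\varphi)$. $R_j(r;\varphi) := -C_j^{-1}(r;\varphi)/\sin(C_j^{-1}(r;\varphi)-\varphi)$ for $j=1,2$. *)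

theory Defs
  imports "HOL-Analysis.Analysis"
begin

definition Cfun :: "real \<Rightarrow> real \<Rightarrow> real" where
  "Cfun \<theta> \<phi> = \<theta> * cot (\<theta> - \<phi>)"

definition Sfun :: "real \<Rightarrow> real" where
  "Sfun \<phi> = (THE \<theta>. 0 < \<theta> \<and> \<theta> < \<phi> \<and> sin (2 * \<theta> - 2 * \<phi>) = 2 * \<theta>)"

definition Mfun :: "real \<Rightarrow> real" where
  "Mfun \<phi> = (cos (Sfun \<phi> - \<phi>))\<^sup>2"

definition C1inv :: "real \<Rightarrow> real \<Rightarrow> real" where
  "C1inv r \<phi> = (THE \<theta>. 0 \<le> \<theta> \<and> \<theta> \<le> Sfun \<phi> \<and> Cfun \<theta> \<phi> = r)"

definition C2inv :: "real \<Rightarrow> real \<Rightarrow> real" where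
  "C2inv r \<phi> = (THE \<theta>. Sfun \<phi> \<le> \<theta> \<and> \<theta> < \<phi> \<and> Cfun \<theta> \<phi> = r)"

definition R1 :: "real \<Rightarrow> real \<Rightarrow> real" where
  "R1 r \<phi> = - C1inv r \<phi> / sin (C1inv r \<phi> - \<phi>)"

definition R2 :: "real \<Rightarrow> real \<Rightarrow> real" where
  "R2 r \<phi> = - C2inv r \<phi> / sin (C2inv r \<phi> - \<phi>)"

end

theory Submission
  imports Defs
begin


context fixes \<phi> :: real assumes phi1: "pi/2 < \<phi>" and phi2: "\<phi> < pi"
begin

definition pS :: "real \<Rightarrow> real" where "pS x = 2*x - sin (2*x - 2*\<phi>)"

lemma sin_pos_phi: "0 < x \<Longrightarrow> x < \<phi> \<Longrightarrow> sin (\<phi> - x) > 0"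
  using phi1 phi2 by (intro sin_gt_zero) auto

lemma sin_phi_pos: "sin \<phi> > 0" using phi1 phi2 by (intro sin_gt_zero) auto

lemma sin_ne: "x < \<phi> \<Longrightarrow> 0 \<le> x \<Longrightarrow> sin (x - \<phi>) \<noteq> 0"
proof -
  assume "x < \<phi>" "0 \<le> x"
  have "sin (\<phi> - x) > 0" using phi1 phi2 \<open>x < \<phi>\<close> \<open>0 \<le> x\<close> by (intro sin_gt_zero) auto
  moreover have "sin (x - \<phi>) = - sin (\<phi> - x)" by (metis minus_diff_eq sin_minus)
  ultimately show ?thesis by simp
qed

lemma pS_deriv: "(pS has_real_derivative (2 - 2*cos (2*x - 2*\<phi>))) (at x)"
  unfolding pS_def[abs_def] by (auto intro!: derivative_eq_intros)

lemma pS_strict: assumes "0 \<le> a" "a < b" "b \<le> \<phi>" shows "pS a < pS b"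
proof (rule DERIV_pos_imp_increasing_open[OF assms(2)])
  fix x assume x: "a < x" "x < b"
  have "cos (2*x - 2*\<phi>) \<noteq> 1"
  proof
    assume "cos (2*x - 2*\<phi>) = 1"
    then obtain n::int where n: "2*x - 2*\<phi> = n * 2 * pi" by (auto simp: cos_one_2pi_int)
    have "(-1)*pi < real_of_int n * pi" using n x assms phi2 by linarith
    hence "-1 < real_of_int n" using pi_gt_zero mult_less_cancel_right_pos by blast
    hence "-1 < n" by linarith
    moreover have "n*2*pi < 0" using n x assms by linarith
    hence "n < 0" by (simp add: mult_less_0_iff)
    ultimately show False by simp
  qed
  moreover have "cos (2*x - 2*\<phi>) \<le> 1" by simp
  ultimately have "cos (2*x - 2*\<phi>) < 1" by linarith
  then show "\<exists>y. (pS has_real_derivative y) (at x) \<and> 0 < y"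
    using pS_deriv by (intro exI[of _ "2 - 2*cos (2*x - 2*\<phi>)"]) auto
next
  show "continuous_on {a..b} pS" unfolding pS_def by (intro continuous_intros)
qed

lemma pS_0: "pS 0 < 0"
proof -
  have "sin (2*\<phi>) < 0" using phi1 phi2 by (intro sin_lt_zero) auto
  thus ?thesis by (simp add: pS_def)
qed

lemma phi_pos: "0 < \<phi>" using phi1 pi_gt_zero by linarith

lemma pS_phi: "pS \<phi> > 0" using phi_pos by (simp add: pS_def)

lemma S_ex: "\<exists>!S. 0 < S \<and> S < \<phi> \<and> sin (2*S - 2*\<phi>) = 2*S"
proof -
  have c: "continuous_on {0..\<phi>} pS" unfolding pS_def by (intro continuous_intros)
  obtain S where S: "0 \<le> S" "S \<le> \<phi>" "pS S = 0"
    using IVT'[OF less_imp_le[OF pS_0] less_imp_le[OF pS_phi] _ c] phi_pos by auto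
  have "S \<noteq> 0" "S \<noteq> \<phi>" using S pS_0 pS_phi by auto
  hence S': "0 < S" "S < \<phi>" using S by auto
  show ?thesis
  proof (rule ex1I[of _ S])
    show "0 < S \<and> S < \<phi> \<and> sin (2*S - 2*\<phi>) = 2*S" using S' S by (simp add: pS_def)
  next
    fix T assume T: "0 < T \<and> T < \<phi> \<and> sin (2*T - 2*\<phi>) = 2*T"
    hence "pS T = 0" by (simp add: pS_def)
    thus "T = S" using pS_strict[of T S] pS_strict[of S T] S' T S(3) by (cases "T < S"; cases "S < T") auto
  qed
qed

lemma Sfun_prop: "0 < Sfun \<phi>" "Sfun \<phi> < \<phi>" "sin (2*Sfun \<phi> - 2*\<phi>) = 2*Sfun \<phi>"
  using theI'[OF S_ex] unfolding Sfun_def by auto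

lemma pS_S: "pS (Sfun \<phi>) = 0" using Sfun_prop by (simp add: pS_def)

lemma C_deriv: assumes "sin (x - \<phi>) \<noteq> 0"
  shows "((\<lambda>t. Cfun t \<phi>) has_real_derivative (- pS x / (2 * (sin (x - \<phi>))\<^sup>2))) (at x)"
proof -
  have d1: "((\<lambda>t. cot (t - \<phi>)) has_real_derivative (-inverse ((sin (x - \<phi>))\<^sup>2)) * 1) (at x)"
    by (rule DERIV_chain2[where g="\<lambda>t. t - \<phi>", OF DERIV_cot[OF assms]]) (auto intro!: derivative_eq_intros)
  have d2: "((\<lambda>t. t * cot (t - \<phi>)) has_real_derivative
     (1 * cot (x - \<phi>) + x * ((-inverse ((sin (x - \<phi>))\<^sup>2)) * 1))) (at x)"
    using DERIV_mult[OF DERIV_ident d1] by (simp add: mult.commute)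
  have "sin (2 * x - 2 * \<phi>) = 2 * sin (x - \<phi>) * cos (x - \<phi>)"
    using sin_double[of "x - \<phi>"] by (simp add: algebra_simps)
  hence "1 * cot (x - \<phi>) + x * ((-inverse ((sin (x - \<phi>))\<^sup>2)) * 1) = - pS x / (2 * (sin (x - \<phi>))\<^sup>2)"
    using assms by (simp add: pS_def cot_def field_simps power2_eq_square)
  with d2 show ?thesis unfolding Cfun_def by simp
qed

lemma C_cont: assumes "0 \<le> a" "b < \<phi>" shows "continuous_on {a..b} (\<lambda>t. Cfun t \<phi>)"
  unfolding Cfun_def cot_def using assms sin_ne by (auto intro!: continuous_intros)

lemma C_0: "Cfun 0 \<phi> = 0" by (simp add: Cfun_def)

abbreviation "S \<equiv> Sfun \<phi>"

lemma C_inc: assumes "0 \<le> a" "a < b" "b \<le> S" shows "Cfun a \<phi> < Cfun b \<phi>"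
proof (rule DERIV_pos_imp_increasing_open[OF assms(2)])
  fix x assume x: "a < x" "x < b"
  have "pS x < pS S" using pS_strict[of x S] x assms Sfun_prop by auto
  hence "pS x < 0" using pS_S by simp
  moreover have "sin (x - \<phi>) \<noteq> 0" using sin_ne x assms Sfun_prop by auto
  ultimately show "\<exists>y. ((\<lambda>t. Cfun t \<phi>) has_real_derivative y) (at x) \<and> 0 < y"
    using C_deriv by (intro exI[of _ "- pS x / (2 * (sin (x - \<phi>))\<^sup>2)"]) (auto intro!: divide_neg_pos)
next
  show "continuous_on {a..b} (\<lambda>t. Cfun t \<phi>)" using C_cont assms Sfun_prop by auto
qed

lemma C_dec: assumes "S \<le> a" "a < b" "b < \<phi>" shows "Cfun a \<phi> > Cfun b \<phi>"
proof (rule DERIV_neg_imp_decreasing_open[OF assms(2)])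
  fix x assume x: "a < x" "x < b"
  have "pS x > pS S" using pS_strict[of S x] x assms Sfun_prop by auto
  hence "pS x > 0" using pS_S by simp
  moreover have "sin (x - \<phi>) \<noteq> 0" using sin_ne x assms Sfun_prop by auto
  ultimately show "\<exists>y. ((\<lambda>t. Cfun t \<phi>) has_real_derivative y) (at x) \<and> y < 0"
    using C_deriv by (intro exI[of _ "- pS x / (2 * (sin (x - \<phi>))\<^sup>2)"]) (auto intro!: divide_pos_pos)
next
  show "continuous_on {a..b} (\<lambda>t. Cfun t \<phi>)" using C_cont assms Sfun_prop by auto
qed

lemma C_S: "Cfun S \<phi> = Mfun \<phi>"
proof -
  have "2 * sin (S - \<phi>) * cos (S - \<phi>) = 2 * S"
    using Sfun_prop(3) sin_double[of "S - \<phi>"] by (simp add: algebra_simps)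
  hence "S = sin (S - \<phi>) * cos (S - \<phi>)" by simp
  moreover have "sin (S - \<phi>) \<noteq> 0" using sin_ne Sfun_prop by auto
  moreover have gen: "\<And>s c. S = s * c \<Longrightarrow> s \<noteq> 0 \<Longrightarrow> S * c / s = c * c" by (simp add: field_simps)
  ultimately have "S * cos (S - \<phi>) / sin (S - \<phi>) = cos (S - \<phi>) * cos (S - \<phi>)" by blast
  thus ?thesis unfolding Cfun_def Mfun_def cot_def
    by (simp add: power2_eq_square)
qed

lemma C_le_M: assumes "0 \<le> x" "x < \<phi>" shows "Cfun x \<phi> \<le> Mfun \<phi>"
  using C_inc[of x S] C_dec[of S x] C_S assms by (cases "x < S"; cases "S < x") auto

lemma C_low: "\<exists>x. S \<le> x \<and> x < \<phi> \<and> Cfun x \<phi> \<le> r"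
proof -
  define u where "u = min (pi/3) (min (\<phi> - S) (S / (2 * (\<bar>r\<bar> + 1))))"
  have S0: "0 < S" "S < \<phi>" using Sfun_prop by auto
  have u0: "0 < u" unfolding u_def using S0 by auto
  have u1: "u \<le> pi/3" "u \<le> \<phi> - S" "u \<le> S / (2 * (\<bar>r\<bar> + 1))" unfolding u_def
    by (rule min.cobounded1, rule min.coboundedI2, rule min.cobounded1, rule min.coboundedI2, rule min.cobounded2)
  define x where "x = \<phi> - u"
  have x: "S \<le> x" "x < \<phi>" using u0 u1 unfolding x_def by auto
  have cu: "cos u \<ge> 1/2" using cos_monotone_0_pi_le[of u "pi/3"] u0 u1 by (simp add: cos_60)
  have su: "0 < sin u" "sin u \<le> u" using u0 u1 sin_x_le_x[of u] pi_gt_zero by (auto intro!: sin_gt_zero)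
  have "Cfun x \<phi> = x * (cos (-u) / sin (-u))"
    unfolding Cfun_def cot_def x_def by simp
  also have "\<dots> = - x * cos u / sin u" by simp
  also have "\<dots> \<le> - x * (1/2) / u"
  proof -
    have "x * (1/2) / u \<le> x * cos u / sin u"
      using x S0 cu su u0 by (intro frac_le mult_left_mono) auto
    thus ?thesis by simp
  qed
  also have "\<dots> \<le> - S * (1/2) / u" using x u0 by (simp add: divide_right_mono)
  also have "\<dots> \<le> r"
  proof -
    have "u * (2 * (\<bar>r\<bar> + 1)) \<le> S" using u1(3) by (simp add: field_simps)
    hence "- S * (1/2) / u \<le> -(\<bar>r\<bar> + 1)" using u0 by (simp add: field_simps)
    thus ?thesis by linarith
  qed
  finally show ?thesis using x by blast
qed

lemma C1inv_prop: assumes "0 \<le> r" "r \<le> Mfun \<phi>"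
  shows "0 \<le> C1inv r \<phi>" "C1inv r \<phi> \<le> S" "Cfun (C1inv r \<phi>) \<phi> = r"
proof -
  have S0: "0 < S" "S < \<phi>" using Sfun_prop by auto
  obtain x where x: "0 \<le> x" "x \<le> S" "Cfun x \<phi> = r"
    using IVT'[of "\<lambda>t. Cfun t \<phi>" 0 r S] C_0 C_S assms C_cont[of 0 S] S0 by auto
  have "\<exists>!x. 0 \<le> x \<and> x \<le> S \<and> Cfun x \<phi> = r"
  proof (rule ex1I[of _ x])
    fix y assume "0 \<le> y \<and> y \<le> S \<and> Cfun y \<phi> = r"
    thus "y = x" using C_inc[of x y] C_inc[of y x] x by (cases "x < y"; cases "y < x") auto
  qed (use x in auto)
  from theI'[OF this] show "0 \<le> C1inv r \<phi>" "C1inv r \<phi> \<le> S" "Cfun (C1inv r \<phi>) \<phi> = r"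
    unfolding C1inv_def by auto
qed

lemma C2inv_prop: assumes "r \<le> Mfun \<phi>"
  shows "S \<le> C2inv r \<phi>" "C2inv r \<phi> < \<phi>" "Cfun (C2inv r \<phi>) \<phi> = r"
proof -
  have S0: "0 < S" "S < \<phi>" using Sfun_prop by auto
  obtain z where z: "S \<le> z" "z < \<phi>" "Cfun z \<phi> \<le> r" using C_low by blast
  obtain x where x: "S \<le> x" "x \<le> z" "Cfun x \<phi> = r"
    using IVT2'[of "\<lambda>t. Cfun t \<phi>" z r S] C_S assms C_cont[of S z] S0 z by auto
  have "\<exists>!x. S \<le> x \<and> x < \<phi> \<and> Cfun x \<phi> = r"
  proof (rule ex1I[of _ x])
    fix y assume "S \<le> y \<and> y < \<phi> \<and> Cfun y \<phi> = r"
    thus "y = x" using C_dec[of x y] C_dec[of y x] x z by (cases "x < y"; cases "y < x") auto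
  qed (use x z in auto)
  from theI'[OF this] show "S \<le> C2inv r \<phi>" "C2inv r \<phi> < \<phi>" "Cfun (C2inv r \<phi>) \<phi> = r"
    unfolding C2inv_def by auto
qed

definition kf :: "real \<Rightarrow> real" where "kf y = y / sin (\<phi> - y) * exp (- Cfun y \<phi>)"

lemma sin_ne2: "x < \<phi> \<Longrightarrow> 0 \<le> x \<Longrightarrow> sin (\<phi> - x) \<noteq> 0"
  using sin_ne by (metis minus_diff_eq sin_minus neg_equal_0_iff_equal)

lemma k_cont: assumes "0 \<le> a" "b < \<phi>" shows "continuous_on {a..b} kf"
proof -
  have h1: "continuous_on {a..b} (\<lambda>y. y / sin (\<phi> - y))"
    using assms sin_ne2 by (auto intro!: continuous_intros)
  have h2: "continuous_on {a..b} (\<lambda>y. exp (- Cfun y \<phi>))"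
    using C_cont[OF assms] by (auto intro!: continuous_intros)
  show ?thesis unfolding kf_def[abs_def] using continuous_on_mult[OF h1 h2] by simp
qed

lemma k_0: "kf 0 = 0" by (simp add: kf_def)

lemma k_pos: "0 < y \<Longrightarrow> y < \<phi> \<Longrightarrow> 0 < kf y"
  using sin_pos_phi by (simp add: kf_def)

lemma k_deriv_pos: assumes "0 < y" "y < \<phi>" shows "\<exists>d. (kf has_real_derivative d) (at y) \<and> 0 < d"
proof -
  define s where "s = sin (\<phi> - y)"
  define c where "c = cos (\<phi> - y)"
  define E where "E = exp (- Cfun y \<phi>)"
  have s0: "s > 0" using sin_pos_phi assms s_def by auto
  have sy: "sin (y - \<phi>) = - s" unfolding s_def by (metis minus_diff_eq sin_minus)
  have s2: "sin (2 * y - 2 * \<phi>) = - 2 * s * c"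
    using sin_double[of "\<phi> - y"] unfolding s_def c_def
    by (metis (no_types, opaque_lifting) minus_diff_eq mult.assoc mult_minus_left right_diff_distrib sin_minus)
  have d1: "((\<lambda>t. t / sin (\<phi> - t)) has_real_derivative (s + y * c) / s\<^sup>2) (at y)"
    using s0 unfolding s_def c_def by (auto intro!: derivative_eq_intros simp: field_simps power2_eq_square)
  have d2: "((\<lambda>t. exp (- Cfun t \<phi>)) has_real_derivative exp (- Cfun y \<phi>) * (- (- pS y / (2 * (sin (y - \<phi>))\<^sup>2)))) (at y)"
    by (rule DERIV_chain2[where f=exp, OF DERIV_exp DERIV_minus[OF C_deriv]]) (use sy s0 in auto)
  have d3: "(kf has_real_derivative ((s + y * c) / s\<^sup>2 * E + (exp (- Cfun y \<phi>) * (- (- pS y / (2 * (sin (y - \<phi>))\<^sup>2)))) * (y / s))) (at y)"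
    unfolding kf_def[abs_def] E_def s_def using DERIV_mult[OF d1 d2] by (simp add: s_def)
  have eq: "(s + y * c) / s\<^sup>2 * E + (exp (- Cfun y \<phi>) * (- (- pS y / (2 * (sin (y - \<phi>))\<^sup>2)))) * (y / s)
     = E * ((y + s * c)\<^sup>2 + s\<^sup>2 * (1 - c\<^sup>2)) / s ^ 3"
    using s0 unfolding E_def[symmetric] pS_def sy s2 by (simp add: field_simps power2_eq_square power3_eq_cube)
  have "s\<^sup>2 + c\<^sup>2 = 1" unfolding s_def c_def by simp
  hence "1 - c\<^sup>2 = s\<^sup>2" by simp
  hence "(y + s * c)\<^sup>2 + s\<^sup>2 * (1 - c\<^sup>2) > 0" using s0 by (simp add: add_nonneg_pos)
  moreover have "E > 0" unfolding E_def by simp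
  ultimately have "E * ((y + s * c)\<^sup>2 + s\<^sup>2 * (1 - c\<^sup>2)) / s ^ 3 > 0" using s0 by simp
  with d3 eq show ?thesis by auto
qed

lemma k_mono: assumes "0 \<le> a" "a < b" "b < \<phi>" shows "kf a < kf b"
  by (rule DERIV_pos_imp_increasing_open[OF assms(2)]) (use k_deriv_pos assms k_cont in auto)

lemma k_big: assumes "0 \<le> c" "c < \<phi>" "L > 0" shows "\<exists>y. c \<le> y \<and> y < \<phi> \<and> L \<le> kf y"
proof -
  define d where "d = min (pi/2) (min (\<phi> - c) ((\<phi> - pi/2)/L))"
  have d1: "d \<le> pi/2" "d \<le> \<phi> - c" "d \<le> (\<phi> - pi/2)/L" unfolding d_def
    by (rule min.cobounded1, rule min.coboundedI2, rule min.cobounded1, rule min.coboundedI2, rule min.cobounded2)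
  have d0: "0 < d" unfolding d_def using assms phi1 by auto
  define y where "y = \<phi> - d"
  have y: "c \<le> y" "y < \<phi>" "\<phi> - pi/2 \<le> y" using d0 d1 unfolding y_def by auto
  have sd: "0 < sin d" "sin d \<le> d" using d0 d1 sin_x_le_x[of d] pi_gt_zero by (auto intro!: sin_gt_zero)
  have cd: "0 \<le> cos d" using d0 d1 by (intro cos_ge_zero) auto
  have "Cfun y \<phi> = y * (cos (-d) / sin (-d))" unfolding Cfun_def cot_def y_def by simp
  also have "\<dots> = - (y * cos d / sin d)" by simp
  also have "\<dots> \<le> 0" using y phi1 sd cd by (intro neg_le_0_iff_le[THEN iffD2] divide_nonneg_pos mult_nonneg_nonneg) auto
  finally have "exp (- Cfun y \<phi>) \<ge> 1" by simp
  have "L \<le> (\<phi> - pi/2) / d" using d1(3) d0 assms(3) by (simp add: field_simps)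
  also have "\<dots> \<le> y / d" using y d0 by (simp add: divide_right_mono)
  also have "\<dots> \<le> y / sin d" using y phi1 sd by (intro divide_left_mono) auto
  also have "\<dots> \<le> y / sin d * exp (- Cfun y \<phi>)"
  proof -
    have "0 \<le> y / sin d" using y phi1 sd by auto
    from mult_left_mono[OF \<open>exp (- Cfun y \<phi>) \<ge> 1\<close> this] show ?thesis by simp
  qed
  also have "\<dots> = kf y" unfolding kf_def y_def by simp
  finally show ?thesis using y by blast
qed

lemma M_nonneg: "0 \<le> Mfun \<phi>" unfolding Mfun_def by simp

lemma right_branch: assumes "\<beta> \<le> Mfun \<phi>" "kf (C2inv \<beta> \<phi>) \<le> L"
  shows "\<exists>y. 0 < y \<and> y < \<phi> \<and> Cfun y \<phi> \<le> \<beta> \<and> kf y = L"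
proof -
  define c where "c = C2inv \<beta> \<phi>"
  have c: "S \<le> c" "c < \<phi>" "Cfun c \<phi> = \<beta>" using C2inv_prop[OF assms(1)] c_def by auto
  have S0: "0 < S" "S < \<phi>" using Sfun_prop by auto
  have kc: "0 < kf c" using k_pos c S0 by auto
  obtain y1 where y1: "c \<le> y1" "y1 < \<phi>" "L \<le> kf y1" using k_big[of c L] c S0 assms kc c_def by auto
  obtain y where y: "c \<le> y" "y \<le> y1" "kf y = L"
    using IVT'[of kf c L y1] y1 assms(2) k_cont[of c y1] c S0 c_def by auto
  have "Cfun y \<phi> \<le> \<beta>"
  proof (cases "y = c")
    case False thus ?thesis using C_dec[of c y] c y y1 by auto
  qed (use c in auto)
  thus ?thesis using y y1 c S0 by (intro exI[of _ y]) auto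
qed

lemma main_branch_iff: assumes "L > 0"
  shows "(\<exists>y. 0 < y \<and> y < \<phi> \<and> Cfun y \<phi> \<le> \<beta> \<and> kf y = L) \<longleftrightarrow>
     \<not> ((\<beta> \<le> 0 \<and> L < kf (C2inv \<beta> \<phi>)) \<or>
         (0 < \<beta> \<and> \<beta> < Mfun \<phi> \<and> kf (C1inv \<beta> \<phi>) < L \<and> L < kf (C2inv \<beta> \<phi>)))"
proof
  have S0: "0 < S" "S < \<phi>" using Sfun_prop by auto
  assume "\<exists>y. 0 < y \<and> y < \<phi> \<and> Cfun y \<phi> \<le> \<beta> \<and> kf y = L"
  then obtain y where y: "0 < y" "y < \<phi>" "Cfun y \<phi> \<le> \<beta>" "kf y = L" by blast
  show "\<not> ((\<beta> \<le> 0 \<and> L < kf (C2inv \<beta> \<phi>)) \<or>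
         (0 < \<beta> \<and> \<beta> < Mfun \<phi> \<and> kf (C1inv \<beta> \<phi>) < L \<and> L < kf (C2inv \<beta> \<phi>)))"
  proof
    assume H: "(\<beta> \<le> 0 \<and> L < kf (C2inv \<beta> \<phi>)) \<or>
         (0 < \<beta> \<and> \<beta> < Mfun \<phi> \<and> kf (C1inv \<beta> \<phi>) < L \<and> L < kf (C2inv \<beta> \<phi>))"
    hence bM: "\<beta> \<le> Mfun \<phi>" using M_nonneg by auto
    define c2 where "c2 = C2inv \<beta> \<phi>"
    have c2: "S \<le> c2" "c2 < \<phi>" "Cfun c2 \<phi> = \<beta>" using C2inv_prop[OF bM] c2_def by auto
    have "L < kf c2" using H c2_def by auto
    hence "y < c2" using k_mono[of c2 y] y c2 S0 by (cases "y = c2"; cases "c2 < y") auto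
    have yS: "y \<le> S"
    proof (rule ccontr)
      assume "\<not> y \<le> S"
      hence "Cfun y \<phi> > Cfun c2 \<phi>" using C_dec[of y c2] \<open>y < c2\<close> c2 by auto
      thus False using y c2 by auto
    qed
    show False
    proof (cases "\<beta> \<le> 0")
      case True
      have "Cfun y \<phi> > 0" using C_inc[of 0 y] yS y C_0 by auto
      thus False using True y by auto
    next
      case False
      hence b: "0 < \<beta>" "\<beta> < Mfun \<phi>" "kf (C1inv \<beta> \<phi>) < L" using H by auto
      define c1 where "c1 = C1inv \<beta> \<phi>"
      have c1: "0 \<le> c1" "c1 \<le> S" "Cfun c1 \<phi> = \<beta>" using C1inv_prop[of \<beta>] b c1_def by auto
      have "kf c1 < kf y" using b y c1_def by auto
      hence "c1 < y" using k_mono[of y c1] y c1 S0 by (cases "y = c1"; cases "y < c1") auto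
      hence "Cfun y \<phi> > \<beta>" using C_inc[of c1 y] c1 yS by auto
      thus False using y by auto
    qed
  qed
next
  have S0: "0 < S" "S < \<phi>" using Sfun_prop by auto
  assume H: "\<not> ((\<beta> \<le> 0 \<and> L < kf (C2inv \<beta> \<phi>)) \<or>
         (0 < \<beta> \<and> \<beta> < Mfun \<phi> \<and> kf (C1inv \<beta> \<phi>) < L \<and> L < kf (C2inv \<beta> \<phi>)))"
  show "\<exists>y. 0 < y \<and> y < \<phi> \<and> Cfun y \<phi> \<le> \<beta> \<and> kf y = L"
  proof (cases "\<beta> \<le> 0")
    case True
    thus ?thesis using H right_branch[of \<beta> L] M_nonneg by auto
  next
    case b0: False
    show ?thesis
    proof (cases "\<beta> < Mfun \<phi>")
      case bM: True
      show ?thesis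
      proof (cases "kf (C2inv \<beta> \<phi> ) \<le> L")
        case True thus ?thesis using right_branch[of \<beta> L] bM by auto
      next
        case False
        define c1 where "c1 = C1inv \<beta> \<phi>"
        have c1: "0 \<le> c1" "c1 \<le> S" "Cfun c1 \<phi> = \<beta>" using C1inv_prop[of \<beta>] b0 bM c1_def by auto
        have "L \<le> kf c1" using H False b0 bM c1_def by auto
        then obtain y where y: "0 \<le> y" "y \<le> c1" "kf y = L"
          using IVT'[of kf 0 L c1] k_0 assms k_cont[of 0 c1] c1 S0 by auto
        have "y \<noteq> 0" using y k_0 assms by auto
        have "Cfun y \<phi> \<le> \<beta>"
        proof (cases "y = c1")
          case False thus ?thesis using C_inc[of y c1] c1 y by auto
        qed (use c1 in auto)
        thus ?thesis using y c1 S0 \<open>y \<noteq> 0\<close> by (intro exI[of _ y]) auto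
      qed
    next
      case False
      obtain y1 where y1: "0 \<le> y1" "y1 < \<phi>" "L \<le> kf y1" using k_big[of 0 L] assms phi_pos by auto
      obtain y where y: "0 \<le> y" "y \<le> y1" "kf y = L"
        using IVT'[of kf 0 L y1] k_0 assms k_cont[of 0 y1] y1 by auto
      have "y \<noteq> 0" using y k_0 assms by auto
      have "Cfun y \<phi> \<le> \<beta>" using C_le_M[of y] y y1 False by auto
      thus ?thesis using y y1 \<open>y \<noteq> 0\<close> by (intro exI[of _ y]) auto
    qed
  qed
qed

end



definition BP :: "real \<Rightarrow> real \<Rightarrow> real \<Rightarrow> real \<Rightarrow> bool" where
  "BP \<phi> L t y \<longleftrightarrow> (\<exists>\<rho>>0. t = \<rho> * cos (\<phi> - y) \<and> y = \<rho> * sin (\<phi> - y) \<and> \<rho> * exp t = L)"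

lemma qdec: fixes a c :: real assumes "-1 \<le> a" "a < c" shows "- c * exp c < - a * exp a"
proof -
  have "(\<lambda>t. - t * exp t) c < (\<lambda>t. - t * exp t) a"
  proof (rule DERIV_neg_imp_decreasing_open[OF assms(2)])
  fix x assume x: "a < x" "x < c"
  have "((\<lambda>t. - t * exp t) has_real_derivative (- (exp x + x * exp x))) (at x)"
    by (auto intro!: derivative_eq_intros)
  moreover have "- (exp x + x * exp x) < 0"
  proof -
    have "0 < (1 + x) * exp x" using x assms by (intro mult_pos_pos) auto
    thus ?thesis by (simp add: algebra_simps)
  qed
  ultimately show "\<exists>y. ((\<lambda>t. - t * exp t) has_real_derivative y) (at x) \<and> y < 0" by blast
  qed (auto intro!: continuous_intros)
  thus ?thesis by simp
qed

lemma qbound: fixes t :: real shows "- t * exp t \<le> exp (-1)"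
proof -
  have "1 + (-t - 1) \<le> exp (-t - 1)" by (rule exp_ge_add_one_self)
  hence "- t \<le> exp (-t) * exp (-1)" by (simp add: exp_diff[symmetric] exp_add[symmetric])
  hence "- t * exp t \<le> exp (-t) * exp (-1) * exp t" by (intro mult_right_mono) auto
  also have "\<dots> = exp (-1)" by (simp add: exp_minus field_simps)
  finally show ?thesis .
qed

context fixes \<phi> L :: real assumes phi1: "pi/2 < \<phi>" and phi2: "\<phi> < pi" and L0: "L > 0"
begin

definition Fq :: "real \<Rightarrow> real" where "Fq t = (L * exp (- t))\<^sup>2 - t\<^sup>2"
definition gq :: "real \<Rightarrow> real" where "gq t = arccos (t * exp t / L) + sqrt (Fq t)"

lemma b3_ex: "\<exists>b>0. b * exp b = L"
proof -
  have "L \<le> L * exp L" using L0 by simp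
  moreover have "continuous_on {0..L} (\<lambda>t. t * exp t)" by (auto intro!: continuous_intros)
  ultimately obtain b where b: "0 \<le> b" "b \<le> L" "b * exp b = L"
    using IVT'[of "\<lambda>t. t * exp t" 0 L L] L0 by auto
  have "b \<noteq> 0" using b L0 by auto
  thus ?thesis using b by (intro exI[of _ b]) auto
qed

lemma Fq_nonneg_iff: "Fq t \<ge> 0 \<longleftrightarrow> \<bar>t * exp t / L\<bar> \<le> 1"
proof -
  have "Fq t \<ge> 0 \<longleftrightarrow> \<bar>t\<bar> \<le> \<bar>L * exp (- t)\<bar>" unfolding Fq_def by (simp add: abs_le_square_iff)
  also have "\<dots> \<longleftrightarrow> \<bar>t\<bar> \<le> L * exp (- t)" using L0 by simp
  also have "\<dots> \<longleftrightarrow> \<bar>t\<bar> * exp t \<le> L" by (simp add: exp_minus field_simps)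
  also have "\<dots> \<longleftrightarrow> \<bar>t * exp t / L\<bar> \<le> 1" using L0 by (simp add: abs_mult field_simps)
  finally show ?thesis .
qed

lemma Fq_pos_iff: "Fq t > 0 \<longleftrightarrow> \<bar>t\<bar> * exp t < L"
proof -
  have "Fq t > 0 \<longleftrightarrow> \<bar>t\<bar> < \<bar>L * exp (- t)\<bar>" unfolding Fq_def using abs_le_square_iff[of "L * exp (- t)" t] by linarith
  also have "\<dots> \<longleftrightarrow> \<bar>t\<bar> < L * exp (- t)" using L0 by simp
  also have "\<dots> \<longleftrightarrow> \<bar>t\<bar> * exp t < L" by (simp add: exp_minus field_simps)
  finally show ?thesis .
qed

lemma ivt_step:
  assumes "T < b" "b * exp b = L" "Fq T \<ge> 0" "\<And>t. T < t \<Longrightarrow> t < b \<Longrightarrow> Fq t > 0" "gq T > \<phi>"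
  shows "\<exists>t' y'. T < t' \<and> 0 < y' \<and> y' < \<phi> \<and> BP \<phi> L t' y'"
proof -
  have "L * exp (- b) = b" using assms(2) by (simp add: exp_minus field_simps)
  hence Fb: "Fq b = 0" unfolding Fq_def by simp
  have Fnn: "\<forall>t\<in>{T..b}. Fq t \<ge> 0" using assms(3,4) Fb by (auto simp: le_less)
  have Fnn': "\<forall>t\<in>{T..b}. -1 \<le> t * exp t / L \<and> t * exp t / L \<le> 1"
  proof
    fix t assume "t \<in> {T..b}"
    hence "\<bar>t * exp t / L\<bar> \<le> 1" using Fnn Fq_nonneg_iff by blast
    thus "-1 \<le> t * exp t / L \<and> t * exp t / L \<le> 1" by linarith
  qed
  have cont: "continuous_on {T..b} gq" unfolding gq_def[abs_def] Fq_def
    using Fnn' L0 by (auto intro!: continuous_intros)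
  have gb: "gq b = 0" unfolding gq_def using Fb assms(2) L0 by simp
  obtain t' where t': "T \<le> t'" "t' \<le> b" "gq t' = \<phi>"
    using IVT2'[of gq b \<phi> T] cont gb assms phi1 pi_gt_zero by auto
  have "t' \<noteq> T" "t' \<noteq> b" using t' assms gb phi1 pi_gt_zero by auto
  hence t'': "T < t'" "t' < b" using t' by auto
  have Fp: "Fq t' > 0" using assms(4) t'' by auto
  define q where "q = t' * exp t' / L"
  define Y where "Y = sqrt (Fq t')"
  define \<rho> where "\<rho> = L * exp (- t')"
  have "t' \<in> {T..b}" using t'' by auto
  hence q1: "-1 \<le> q" "q \<le> 1" using Fnn' unfolding q_def by blast+
  have Y0: "0 < Y" using Fp Y_def by auto
  have Yeq: "\<phi> - Y = arccos q" using t' q_def Y_def gq_def by simp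
  have q_ne: "q \<noteq> 1"
  proof
    assume "q = 1"
    hence "t' * exp t' = L" using q_def L0 by simp
    hence "L * exp (- t') = t'" by (simp add: exp_minus field_simps)
    hence "Fq t' = 0" unfolding Fq_def by simp
    thus False using Fp by simp
  qed
  have "arccos q > 0" using arccos_eq_0_iff[of q] q1 q_ne arccos_lbound[of q] by (auto simp: le_less)
  hence Y1: "Y < \<phi>" using Yeq by simp
  have rho0: "\<rho> > 0" using L0 \<rho>_def by simp
  have tq: "t' = \<rho> * q" unfolding \<rho>_def q_def using L0 by (simp add: exp_minus field_simps)
  have "BP \<phi> L t' Y" unfolding BP_def
  proof (intro exI[of _ \<rho>] conjI)
    show "t' = \<rho> * cos (\<phi> - Y)" using Yeq cos_arccos[OF q1] tq by simp
    have "\<rho> * sin (\<phi> - Y) = \<rho> * sqrt (1 - q\<^sup>2)" using Yeq sin_arccos[OF q1] by simp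
    also have "\<dots> = sqrt (\<rho>\<^sup>2 * (1 - q\<^sup>2))" using rho0 by (simp add: real_sqrt_mult)
    also have "\<dots> = sqrt (\<rho>\<^sup>2 - (\<rho> * q)\<^sup>2)"
      by (simp add: power_mult_distrib right_diff_distrib)
    also have "\<dots> = sqrt (\<rho>\<^sup>2 - t'\<^sup>2)" using tq by simp
    also have "\<dots> = Y" unfolding Y_def Fq_def \<rho>_def by simp
    finally show "Y = \<rho> * sin (\<phi> - Y)" by simp
    show "\<rho> * exp t' = L" unfolding \<rho>_def by (simp add: exp_minus)
  qed (use rho0 in auto)
  thus ?thesis using t'' Y0 Y1 by blast
qed

lemma Fq_pos_nonneg: assumes "0 \<le> t" "t < b" "b * exp b = L" shows "Fq t > 0"
proof -
  have "t * exp t < b * exp b" using assms by (intro mult_strict_mono) auto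
  thus ?thesis using Fq_pos_iff assms by simp
qed

lemma other_branch: assumes "BP \<phi> L t0 y0"
  shows "\<exists>t' y'. t0 \<le> t' \<and> 0 < y' \<and> y' < \<phi> \<and> BP \<phi> L t' y'"
proof (cases "0 < y0 \<and> y0 < \<phi>")
  case True thus ?thesis using assms by blast
next
  case yout: False
  obtain \<rho>0 where r: "\<rho>0 > 0" "t0 = \<rho>0 * cos (\<phi> - y0)" "y0 = \<rho>0 * sin (\<phi> - y0)" "\<rho>0 * exp t0 = L"
    using assms unfolding BP_def by blast
  have rL: "L * exp (- t0) = \<rho>0" using r(4) by (simp add: exp_minus field_simps)
  have Ft0: "Fq t0 = y0\<^sup>2"
  proof -
    have "Fq t0 = \<rho>0\<^sup>2 * (1 - (cos (\<phi> - y0))\<^sup>2)" unfolding Fq_def rL using r(2)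
      by (simp add: power_mult_distrib right_diff_distrib)
    also have "\<dots> = (\<rho>0 * sin (\<phi> - y0))\<^sup>2" by (simp add: sin_squared_eq power_mult_distrib)
    finally show ?thesis using r(3) by simp
  qed
  have y0ne: "y0 \<noteq> 0"
  proof
    assume "y0 = 0"
    hence "\<rho>0 * sin \<phi> = 0" using r(3) by simp
    moreover have "sin \<phi> > 0" using phi1 phi2 by (intro sin_gt_zero) auto
    ultimately show False using r(1) by simp
  qed
  have Ft0p: "Fq t0 > 0" using Ft0 y0ne by simp
  have q0: "t0 * exp t0 / L = cos (\<phi> - y0)" using r(2) r(4) L0 by (simp add: field_simps)
  have gt0: "gq t0 > \<phi>"
  proof (cases "y0 \<ge> \<phi>")
    case True
    have "cos (\<phi> - y0) \<noteq> 1"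
    proof
      assume "cos (\<phi> - y0) = 1"
      hence "sin (\<phi> - y0) = 0" using sin_cos_squared_add[of "\<phi> - y0"] by simp
      thus False using r(3) y0ne by simp
    qed
    moreover have cb: "-1 \<le> cos (\<phi> - y0)" "cos (\<phi> - y0) \<le> 1" by auto
    ultimately have "arccos (cos (\<phi> - y0)) \<noteq> 0" using arccos_eq_0_iff[of "cos (\<phi> - y0)"] by auto
    moreover have "arccos (cos (\<phi> - y0)) \<ge> 0" using arccos_lbound[OF cb] .
    ultimately have "arccos (cos (\<phi> - y0)) > 0" by linarith
    thus ?thesis unfolding gq_def q0 Ft0 using True by simp
  next
    case False
    hence yn: "y0 < 0" using yout y0ne by auto
    define c where "c = cos (\<phi> - y0)"
    define s where "s = sin (\<phi> - y0)"
    define \<alpha> where "\<alpha> = arccos c"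
    have "\<rho>0 * s < 0" using yn r(3) s_def by simp
    hence sn: "s < 0" using r(1) by (simp add: mult_less_0_iff)
    have c1: "-1 \<le> c" "c \<le> 1" unfolding c_def by auto
    have ca: "cos \<alpha> = c" using cos_arccos[OF c1] \<alpha>_def by simp
    have sa: "sin \<alpha> = - s"
    proof -
      have "sin \<alpha> = sqrt (1 - c\<^sup>2)" using sin_arccos[OF c1] \<alpha>_def by simp
      also have "1 - c\<^sup>2 = s\<^sup>2" unfolding c_def s_def by (simp add: sin_squared_eq)
      finally show ?thesis using sn by simp
    qed
    have "cos (\<alpha> + (\<phi> - y0)) = 1" unfolding cos_add ca sa
      using sin_cos_squared_add[of "\<phi> - y0"] unfolding c_def[symmetric] s_def[symmetric]
      by (simp add: power2_eq_square)
    then obtain n :: int where n: "\<alpha> + (\<phi> - y0) = n * 2 * pi" by (auto simp: cos_one_2pi_int)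
    have a0: "\<alpha> \<ge> 0" unfolding \<alpha>_def using arccos_lbound[OF c1] by simp
    have "real_of_int n * 2 * pi > 0" using n a0 yn phi1 pi_gt_zero by linarith
    hence "n > 0" by (simp add: zero_less_mult_iff)
    hence "real_of_int n \<ge> 1" by simp
    hence "real_of_int n * 2 * pi \<ge> 2 * pi" using pi_gt_zero by simp
    moreover have "gq t0 = \<alpha> - y0" unfolding gq_def q0 Ft0 \<alpha>_def c_def using yn by simp
    ultimately show ?thesis using n phi2 by linarith
  qed
  obtain b where b: "b > 0" "b * exp b = L" using b3_ex by blast
  show ?thesis
  proof (cases "t0 \<ge> -1 \<or> exp (-1) < L")
    case True
    have tb: "t0 < b"
    proof (rule ccontr)
      assume "\<not> t0 < b"
      hence "b * exp b \<le> t0 * exp t0" using b by (intro mult_mono) auto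
      moreover have "\<bar>t0\<bar> = t0" using \<open>\<not> t0 < b\<close> b by auto
      ultimately have "\<not> \<bar>t0\<bar> * exp t0 < L" using b by auto
      hence "\<not> Fq t0 > 0" using Fq_pos_iff by blast
      thus False using Ft0p by simp
    qed
    have pos: "Fq t > 0" if "t0 < t" "t < b" for t
    proof (cases "t \<ge> 0")
      case True thus ?thesis using Fq_pos_nonneg that b by auto
    next
      case False
      have "- t * exp t < L"
      proof (cases "exp (-1) < L")
        case True thus ?thesis using qbound[of t] by linarith
      next
        case False
        hence "t0 \<ge> -1" using \<open>t0 \<ge> -1 \<or> exp (-1) < L\<close> by auto
        have "t0 < 0" using that \<open>\<not> t \<ge> 0\<close> by auto
        hence "- t0 * exp t0 < L" using Ft0p Fq_pos_iff by simp
        moreover have "- t * exp t < - t0 * exp t0" using qdec[of t0 t] \<open>t0 \<ge> -1\<close> that by auto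
        ultimately show ?thesis by linarith
      qed
      thus ?thesis using Fq_pos_iff False by simp
    qed
    obtain t' y' where "t0 < t'" "0 < y'" "y' < \<phi>" "BP \<phi> L t' y'"
      using ivt_step[OF tb b(2) less_imp_le[OF Ft0p] pos gt0] by blast
    thus ?thesis by (intro exI[of _ t'] exI[of _ y']) auto
  next
    case False
    hence tm: "t0 < -1" "L \<le> exp (-1)" by auto
    have "continuous_on {-1..0} (\<lambda>t::real. - t * exp t)"
      by (rule continuous_on_mult[OF continuous_on_minus[OF continuous_on_id] continuous_on_exp[OF continuous_on_id]])
    then obtain T where T: "-1 \<le> T" "T \<le> 0" "- T * exp T = L"
      using IVT2'[of "\<lambda>t. - t * exp t" 0 L "-1"] tm L0 by auto
    have "T \<noteq> 0" using T L0 by auto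
    hence T0: "T < 0" using T by simp
    have "L * exp (- T) = - T" using T(3) by (simp add: exp_minus field_simps)
    hence FT: "Fq T = 0" unfolding Fq_def by simp
    have "T * exp T / L = -1" using T(3) L0 by (simp add: field_simps)
    hence gT: "gq T = pi" unfolding gq_def FT by simp
    have pos: "Fq t > 0" if "T < t" "t < b" for t
    proof (cases "t \<ge> 0")
      case True thus ?thesis using Fq_pos_nonneg that b by auto
    next
      case False
      have "- t * exp t < L" using qdec[of T t] T that by auto
      thus ?thesis using Fq_pos_iff False by simp
    qed
    obtain t' y' where "T < t'" "0 < y'" "y' < \<phi>" "BP \<phi> L t' y'"
      using ivt_step[of T b, OF _ b(2) _ pos] T0 b FT gT phi2 by auto
    thus ?thesis using T tm by (intro exI[of _ t'] exI[of _ y']) auto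
  qed
qed

end



lemma main_branch_BP: assumes "pi/2 < \<phi>" "\<phi> < pi" "0 < y" "y < \<phi>"
  shows "BP \<phi> L t y \<longleftrightarrow> t = - Cfun y \<phi> \<and> L = kf \<phi> y"
proof -
  have s: "sin (\<phi> - y) > 0" using assms by (intro sin_gt_zero) auto
  have sy: "sin (y - \<phi>) = - sin (\<phi> - y)" by (metis minus_diff_eq sin_minus)
  have cy: "cos (y - \<phi>) = cos (\<phi> - y)" by (metis minus_diff_eq cos_minus)
  have C: "- Cfun y \<phi> = y / sin (\<phi> - y) * cos (\<phi> - y)" unfolding Cfun_def cot_def sy cy by simp
  show ?thesis
  proof
    assume "BP \<phi> L t y"
    then obtain \<rho> where r: "\<rho> > 0" "t = \<rho> * cos (\<phi> - y)" "y = \<rho> * sin (\<phi> - y)" "\<rho> * exp t = L"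
      unfolding BP_def by blast
    have "\<rho> = y / sin (\<phi> - y)" using r(3) s by (simp add: field_simps)
    hence "t = - Cfun y \<phi>" using r(2) C by simp
    moreover have "L = y / sin (\<phi> - y) * exp t" using r(4) \<open>\<rho> = _\<close> by simp
    ultimately have "L = kf \<phi> y" unfolding kf_def[OF assms(1,2)] by simp
    moreover note \<open>t = - Cfun y \<phi>\<close>
    ultimately show "t = - Cfun y \<phi> \<and> L = kf \<phi> y" by simp
  next
    assume h: "t = - Cfun y \<phi> \<and> L = kf \<phi> y"
    show "BP \<phi> L t y" unfolding BP_def
    proof (intro exI[of _ "y / sin (\<phi> - y)"] conjI)
      show "0 < y / sin (\<phi> - y)" using s assms by simp
      show "t = y / sin (\<phi> - y) * cos (\<phi> - y)" using h C by simp
      show "y = y / sin (\<phi> - y) * sin (\<phi> - y)" using s by simp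
      show "y / sin (\<phi> - y) * exp t = L" using h unfolding kf_def[OF assms(1,2)] by simp
    qed
  qed
qed

lemma root_iff:
  fixes a \<tau> :: real and w z :: complex
  shows "z + complex_of_real a - w * exp (- (complex_of_real \<tau>) * z) = 0 \<longleftrightarrow>
    (Re z + a = cmod w * exp (- \<tau> * Re z) * cos (Arg w - \<tau> * Im z) \<and>
     Im z = cmod w * exp (- \<tau> * Re z) * sin (Arg w - \<tau> * Im z))"
proof -
  define r where "r = cmod w"
  define \<psi> where "\<psi> = Arg w"
  have w: "w = complex_of_real r * cis \<psi>" using rcis_cmod_Arg[of w] unfolding r_def \<psi>_def by (simp add: rcis_def)
  have e: "exp (- (complex_of_real \<tau>) * z) = complex_of_real (exp (- \<tau> * Re z)) * cis (- \<tau> * Im z)"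
    by (subst exp_eq_polar) simp
  have "w * exp (- (complex_of_real \<tau>) * z) = complex_of_real (cmod w * exp (- \<tau> * Re z)) * cis (Arg w - \<tau> * Im z)"
  proof -
    have c: "cis \<psi> * cis (- \<tau> * Im z) = cis (\<psi> - \<tau> * Im z)" by (simp add: cis_mult)
    have "w * exp (- (complex_of_real \<tau>) * z) = complex_of_real r * complex_of_real (exp (- \<tau> * Re z)) * (cis \<psi> * cis (- \<tau> * Im z))"
      unfolding w e by (simp only: mult_ac)
    thus ?thesis unfolding c r_def[symmetric] \<psi>_def[symmetric] by simp
  qed
  hence "z + complex_of_real a - w * exp (- (complex_of_real \<tau>) * z) = 0 \<longleftrightarrow>
     z + complex_of_real a = complex_of_real (cmod w * exp (- \<tau> * Re z)) * cis (Arg w - \<tau> * Im z)" by auto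
  also have "\<dots> \<longleftrightarrow> (Re z + a = cmod w * exp (- \<tau> * Re z) * cos (Arg w - \<tau> * Im z) \<and>
     Im z = cmod w * exp (- \<tau> * Re z) * sin (Arg w - \<tau> * Im z))"
    by (simp add: complex_eq_iff)
  finally show ?thesis .
qed




lemma core:
  fixes a \<tau> :: real and w :: complex
  assumes p1: "pi / 2 < Arg w" and p2: "Arg w < pi" and tau: "\<tau> > 0"
  shows "(\<forall>z::complex. z + complex_of_real a - w * exp (- (complex_of_real \<tau>) * z) = 0 \<longrightarrow> Re z < 0)
    \<longleftrightarrow>
    ((a \<ge> 0 \<and> cmod w < R2 (- \<tau> * a) (Arg w) / \<tau>)
     \<or> (- Mfun (Arg w) / \<tau> < a \<and> a < 0 \<and>
         R1 (- \<tau> * a) (Arg w) / \<tau> < cmod w \<and> cmod w < R2 (- \<tau> * a) (Arg w) / \<tau>))"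
proof -
  define \<phi> where "\<phi> = Arg w"
  define r where "r = cmod w"
  define L where "L = \<tau> * r * exp (\<tau> * a)"
  define \<beta> where "\<beta> = - \<tau> * a"
  have ph1: "pi/2 < \<phi>" and ph2: "\<phi> < pi" using p1 p2 \<phi>_def by auto
  have "w \<noteq> 0" using p1 pi_gt_zero by (auto simp: Arg_zero)
  hence r0: "r > 0" using r_def by simp
  have L0: "L > 0" using r0 tau L_def by simp
  let ?root = "\<lambda>z::complex. z + complex_of_real a - w * exp (- (complex_of_real \<tau>) * z) = 0"
  have step1: "(\<exists>z. ?root z \<and> 0 \<le> Re z) \<longleftrightarrow> (\<exists>t y. \<tau> * a \<le> t \<and> BP \<phi> L t y)"
  proof
    assume "\<exists>z. ?root z \<and> 0 \<le> Re z"
    then obtain z where z: "?root z" "0 \<le> Re z" by blast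
    have e: "Re z + a = r * exp (- \<tau> * Re z) * cos (\<phi> - \<tau> * Im z)"
            "Im z = r * exp (- \<tau> * Re z) * sin (\<phi> - \<tau> * Im z)"
      using z(1) root_iff unfolding r_def \<phi>_def by blast+
    define \<rho> where "\<rho> = \<tau> * r * exp (- \<tau> * Re z)"
    have "BP \<phi> L (\<tau> * Re z + \<tau> * a) (\<tau> * Im z)" unfolding BP_def
    proof (intro exI[of _ \<rho>] conjI)
      show "0 < \<rho>" using tau r0 \<rho>_def by simp
      show "\<tau> * Re z + \<tau> * a = \<rho> * cos (\<phi> - \<tau> * Im z)"
        using e(1) unfolding \<rho>_def by (simp add: algebra_simps distrib_left[symmetric])
      show "\<tau> * Im z = \<rho> * sin (\<phi> - \<tau> * Im z)"
        using e(2) unfolding \<rho>_def by (simp add: algebra_simps)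
      show "\<rho> * exp (\<tau> * Re z + \<tau> * a) = L"
        unfolding \<rho>_def L_def by (simp add: exp_add exp_minus field_simps)
    qed
    moreover have "\<tau> * a \<le> \<tau> * Re z + \<tau> * a" using tau z(2) by simp
    ultimately show "\<exists>t y. \<tau> * a \<le> t \<and> BP \<phi> L t y" by blast
  next
    assume "\<exists>t y. \<tau> * a \<le> t \<and> BP \<phi> L t y"
    then obtain t y \<rho> where ty: "\<tau> * a \<le> t" "\<rho> > 0" "t = \<rho> * cos (\<phi> - y)" "y = \<rho> * sin (\<phi> - y)" "\<rho> * exp t = L"
      unfolding BP_def by blast
    define z where "z = Complex ((t - \<tau> * a) / \<tau>) (y / \<tau>)"
    have Rz: "\<tau> * Re z = t - \<tau> * a" "\<tau> * Im z = y" unfolding z_def using tau by auto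
    have rho: "\<rho> = \<tau> * r * exp (- \<tau> * Re z)"
    proof -
      have "\<rho> = L * exp (- t)" using ty(5) by (simp add: exp_minus field_simps)
      also have "\<dots> = \<tau> * r * (exp (\<tau> * a) * exp (- t))" unfolding L_def by simp
      also have "\<dots> = \<tau> * r * exp (\<tau> * a + - t)" by (simp add: mult_exp_exp)
      also have "\<tau> * a + - t = - \<tau> * Re z" using Rz(1) by simp
      hence "\<tau> * r * exp (\<tau> * a + - t) = \<tau> * r * exp (- \<tau> * Re z)" by simp
      finally show ?thesis .
    qed
    have "?root z" unfolding root_iff r_def[symmetric] \<phi>_def[symmetric]
    proof
      have "\<tau> * (Re z + a) = t" using Rz(1) by (simp add: algebra_simps)
      also have "t = \<rho> * cos (\<phi> - y)" by (rule ty(3))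
      also have "\<dots> = \<tau> * (r * exp (- \<tau> * Re z) * cos (\<phi> - \<tau> * Im z))" unfolding rho Rz(2) by simp
      finally have "\<tau> * (Re z + a) = \<tau> * (r * exp (- \<tau> * Re z) * cos (\<phi> - \<tau> * Im z))" .
      thus "Re z + a = r * exp (- \<tau> * Re z) * cos (\<phi> - \<tau> * Im z)" using tau by simp
      have "\<tau> * Im z = y" by (rule Rz(2))
      also have "y = \<rho> * sin (\<phi> - y)" by (rule ty(4))
      also have "\<dots> = \<tau> * (r * exp (- \<tau> * Re z) * sin (\<phi> - \<tau> * Im z))" unfolding rho Rz(2) by simp
      finally have "\<tau> * Im z = \<tau> * (r * exp (- \<tau> * Re z) * sin (\<phi> - \<tau> * Im z))" .
      thus "Im z = r * exp (- \<tau> * Re z) * sin (\<phi> - \<tau> * Im z)" using tau by simp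
    qed
    moreover have "0 \<le> Re z"
    proof -
      have "0 \<le> \<tau> * Re z" using Rz(1) ty(1) by linarith
      thus ?thesis using tau by (simp add: zero_le_mult_iff)
    qed
    ultimately show "\<exists>z. ?root z \<and> 0 \<le> Re z" by blast
  qed
  have step2: "(\<exists>t y. \<tau> * a \<le> t \<and> BP \<phi> L t y) \<longleftrightarrow> (\<exists>y. 0 < y \<and> y < \<phi> \<and> Cfun y \<phi> \<le> \<beta> \<and> kf \<phi> y = L)"
  proof
    assume "\<exists>t y. \<tau> * a \<le> t \<and> BP \<phi> L t y"
    then obtain t y where ty: "\<tau> * a \<le> t" "BP \<phi> L t y" by blast
    obtain t' y' where t': "t \<le> t'" "0 < y'" "y' < \<phi>" "BP \<phi> L t' y'"
      using other_branch[OF ph1 ph2 L0 ty(2)] by blast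
    have "t' = - Cfun y' \<phi> \<and> L = kf \<phi> y'" using main_branch_BP[OF ph1 ph2 t'(2,3)] t'(4) by blast
    thus "\<exists>y. 0 < y \<and> y < \<phi> \<and> Cfun y \<phi> \<le> \<beta> \<and> kf \<phi> y = L"
      using t' ty unfolding \<beta>_def by (intro exI[of _ y']) auto
  next
    assume "\<exists>y. 0 < y \<and> y < \<phi> \<and> Cfun y \<phi> \<le> \<beta> \<and> kf \<phi> y = L"
    then obtain y where y: "0 < y" "y < \<phi>" "Cfun y \<phi> \<le> \<beta>" "kf \<phi> y = L" by blast
    have "BP \<phi> L (- Cfun y \<phi>) y" using main_branch_BP[OF ph1 ph2 y(1,2)] y(4) by simp
    moreover have "\<tau> * a \<le> - Cfun y \<phi>" using y(3) \<beta>_def by simp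
    ultimately show "\<exists>t y. \<tau> * a \<le> t \<and> BP \<phi> L t y" by blast
  qed
  have R2eq: "R2 \<beta> \<phi> = C2inv \<beta> \<phi> / sin (\<phi> - C2inv \<beta> \<phi>)"
    unfolding R2_def by (metis minus_diff_eq sin_minus minus_divide_divide)
  have R1eq: "R1 \<beta> \<phi> = C1inv \<beta> \<phi> / sin (\<phi> - C1inv \<beta> \<phi>)"
    unfolding R1_def by (metis minus_diff_eq sin_minus minus_divide_divide)
  have k2: "kf \<phi> (C2inv \<beta> \<phi>) = R2 \<beta> \<phi> * exp (- \<beta>)" if "\<beta> \<le> Mfun \<phi>"
    using C2inv_prop[OF ph1 ph2 that] R2eq unfolding kf_def[OF ph1 ph2] by simp
  have k1: "kf \<phi> (C1inv \<beta> \<phi>) = R1 \<beta> \<phi> * exp (- \<beta>)" if "0 \<le> \<beta>" "\<beta> \<le> Mfun \<phi>"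
    using C1inv_prop[OF ph1 ph2 that] R1eq unfolding kf_def[OF ph1 ph2] by simp
  have lt1: "L < X * exp (- \<beta>) \<longleftrightarrow> r < X / \<tau>" for X
    unfolding L_def \<beta>_def using tau by (simp add: field_simps)
  have lt2: "X * exp (- \<beta>) < L \<longleftrightarrow> X / \<tau> < r" for X
    unfolding L_def \<beta>_def using tau by (simp add: field_simps)
  have M0: "0 \<le> Mfun \<phi>" unfolding Mfun_def by simp
  have crit: "((\<beta> \<le> 0 \<and> L < kf \<phi> (C2inv \<beta> \<phi>)) \<or>
         (0 < \<beta> \<and> \<beta> < Mfun \<phi> \<and> kf \<phi> (C1inv \<beta> \<phi>) < L \<and> L < kf \<phi> (C2inv \<beta> \<phi>)))
    \<longleftrightarrow> ((a \<ge> 0 \<and> r < R2 \<beta> \<phi> / \<tau>)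
     \<or> (- Mfun \<phi> / \<tau> < a \<and> a < 0 \<and> R1 \<beta> \<phi> / \<tau> < r \<and> r < R2 \<beta> \<phi> / \<tau>))"
  proof -
    have i: "(\<beta> \<le> 0 \<and> L < kf \<phi> (C2inv \<beta> \<phi>)) \<longleftrightarrow> (a \<ge> 0 \<and> r < R2 \<beta> \<phi> / \<tau>)"
    proof (cases "\<beta> \<le> 0")
      case True
      have bM: "\<beta> \<le> Mfun \<phi>" using True M0 by linarith
      have "a \<ge> 0" using True tau unfolding \<beta>_def by (simp add: zero_le_mult_iff)
      thus ?thesis using k2[OF bM] lt1[of "R2 \<beta> \<phi>"] True by simp
    next
      case False
      thus ?thesis using tau unfolding \<beta>_def by (simp add: zero_le_mult_iff)
    qed
    have ii: "(0 < \<beta> \<and> \<beta> < Mfun \<phi> \<and> kf \<phi> (C1inv \<beta> \<phi>) < L \<and> L < kf \<phi> (C2inv \<beta> \<phi>))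
       \<longleftrightarrow> (- Mfun \<phi> / \<tau> < a \<and> a < 0 \<and> R1 \<beta> \<phi> / \<tau> < r \<and> r < R2 \<beta> \<phi> / \<tau>)"
    proof (cases "0 < \<beta> \<and> \<beta> < Mfun \<phi>")
      case True
      have "- Mfun \<phi> / \<tau> < a" "a < 0" using True tau unfolding \<beta>_def by (auto simp: field_simps mult_less_0_iff)
      thus ?thesis using True k1 k2 lt1 lt2 by simp
    next
      case False
      have "\<not> (- Mfun \<phi> / \<tau> < a \<and> a < 0)" using False tau unfolding \<beta>_def
        by (auto simp: field_simps mult_less_0_iff)
      thus ?thesis using False by blast
    qed
    show ?thesis using i ii by blast
  qed
  have "(\<forall>z. ?root z \<longrightarrow> Re z < 0) \<longleftrightarrow> \<not> (\<exists>z. ?root z \<and> 0 \<le> Re z)" by (auto simp: not_le)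
  also have "\<dots> \<longleftrightarrow> \<not> (\<exists>y. 0 < y \<and> y < \<phi> \<and> Cfun y \<phi> \<le> \<beta> \<and> kf \<phi> y = L)" using step1 step2 by simp
  also have "\<dots> \<longleftrightarrow> ((\<beta> \<le> 0 \<and> L < kf \<phi> (C2inv \<beta> \<phi>)) \<or>
         (0 < \<beta> \<and> \<beta> < Mfun \<phi> \<and> kf \<phi> (C1inv \<beta> \<phi>) < L \<and> L < kf \<phi> (C2inv \<beta> \<phi>)))"
    using main_branch_iff[OF ph1 ph2 L0, of \<beta>] by blast
  also have "\<dots> \<longleftrightarrow> ((a \<ge> 0 \<and> r < R2 \<beta> \<phi> / \<tau>)
     \<or> (- Mfun \<phi> / \<tau> < a \<and> a < 0 \<and> R1 \<beta> \<phi> / \<tau> < r \<and> r < R2 \<beta> \<phi> / \<tau>))" using crit .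
  finally show ?thesis unfolding \<beta>_def r_def \<phi>_def .
qed

lemma root_cnj:
  fixes a \<tau> :: real and w z :: complex
  shows "(z + complex_of_real a - w * exp (- (complex_of_real \<tau>) * z) = 0) \<longleftrightarrow>
         (cnj z + complex_of_real a - cnj w * exp (- (complex_of_real \<tau>) * cnj z) = 0)"
proof -
  have "cnj (z + complex_of_real a - w * exp (- (complex_of_real \<tau>) * z)) =
        cnj z + complex_of_real a - cnj w * exp (- (complex_of_real \<tau>) * cnj z)"
    by (simp add: exp_cnj)
  moreover have "(X = 0) \<longleftrightarrow> (cnj X = 0)" for X :: complex by simp
  ultimately show ?thesis by metis
qed

theorem mainTheorem16:
  fixes a \<tau> :: real and w :: complex
  assumes "w \<notin> \<real>"
    and "pi / 2 < \<bar>Arg w\<bar>" and "\<bar>Arg w\<bar> < pi"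
    and "\<tau> > 0"
  shows "(\<forall>z::complex. z + complex_of_real a - w * exp (- (complex_of_real \<tau>) * z) = 0 \<longrightarrow> Re z < 0)
    \<longleftrightarrow>
    ((a \<ge> 0 \<and> cmod w < R2 (- \<tau> * a) \<bar>Arg w\<bar> / \<tau>)
     \<or> (- Mfun \<bar>Arg w\<bar> / \<tau> < a \<and> a < 0 \<and>
         R1 (- \<tau> * a) \<bar>Arg w\<bar> / \<tau> < cmod w \<and> cmod w < R2 (- \<tau> * a) \<bar>Arg w\<bar> / \<tau>))"
proof (cases "Arg w > 0")
  case True
  hence "\<bar>Arg w\<bar> = Arg w" by simp
  thus ?thesis using core[of w \<tau> a] assms by simp
next
  case False
  hence A: "\<bar>Arg w\<bar> = Arg (cnj w)" using assms(1) by (simp add: Arg_cnj)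
  have c: "cmod (cnj w) = cmod w" by simp
  have "(\<forall>z::complex. z + complex_of_real a - w * exp (- (complex_of_real \<tau>) * z) = 0 \<longrightarrow> Re z < 0)
    \<longleftrightarrow> (\<forall>z::complex. z + complex_of_real a - cnj w * exp (- (complex_of_real \<tau>) * z) = 0 \<longrightarrow> Re z < 0)"
  proof
    assume H: "\<forall>z. z + complex_of_real a - w * exp (- (complex_of_real \<tau>) * z) = 0 \<longrightarrow> Re z < 0"
    show "\<forall>z. z + complex_of_real a - cnj w * exp (- (complex_of_real \<tau>) * z) = 0 \<longrightarrow> Re z < 0"
    proof (intro allI impI)
      fix z assume "z + complex_of_real a - cnj w * exp (- (complex_of_real \<tau>) * z) = 0"
      hence "cnj z + complex_of_real a - w * exp (- (complex_of_real \<tau>) * cnj z) = 0"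
        using root_cnj[of "cnj z" a w \<tau>] by simp
      thus "Re z < 0" using H by fastforce
    qed
  next
    assume H: "\<forall>z. z + complex_of_real a - cnj w * exp (- (complex_of_real \<tau>) * z) = 0 \<longrightarrow> Re z < 0"
    show "\<forall>z. z + complex_of_real a - w * exp (- (complex_of_real \<tau>) * z) = 0 \<longrightarrow> Re z < 0"
    proof (intro allI impI)
      fix z assume "z + complex_of_real a - w * exp (- (complex_of_real \<tau>) * z) = 0"
      hence "cnj z + complex_of_real a - cnj w * exp (- (complex_of_real \<tau>) * cnj z) = 0"
        using root_cnj[of z a w \<tau>] by simp
      thus "Re z < 0" using H by fastforce
    qed
  qed
  also have "\<dots> \<longleftrightarrow> ((a \<ge> 0 \<and> cmod (cnj w) < R2 (- \<tau> * a) (Arg (cnj w)) / \<tau>)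
     \<or> (- Mfun (Arg (cnj w)) / \<tau> < a \<and> a < 0 \<and>
         R1 (- \<tau> * a) (Arg (cnj w)) / \<tau> < cmod (cnj w) \<and> cmod (cnj w) < R2 (- \<tau> * a) (Arg (cnj w)) / \<tau>))"
    by (rule core) (use assms A in auto)
  finally show ?thesis unfolding A c .
qed


end
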